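(* Let $p$ be a prime, $G$ a finite abelian $p$-group, and $\varphi\colon A\to B$ an isomorphism between subgroups of $G$. Let $r\ge 1$ be an integer such that for every integer $s>r$ and every $g\in G$: $g\in H(G,\varphi)$ if and only if $\varphi^i(g)$ is defined for $i=0,\dots,s-1$. Fix an integer $s>r$. For $i\in\mathbb{Z}/s\mathbb{Z}$ let $G_i=G\times\{i\}$, $A_i=A\times\{i\}$, $B_i=B\times\{i\}$, and let $K=G_0*_{A_0=B_1}G_1*_{A_1=B_2}\cdots*_{A_{s-2}=B_{s-1}}G_{s-1}$, where $A_i=B_{i+1}$ identifies $a\times i$ with $\varphi(a)\times(i+1)$. Let $G'=H_1(K;\mathbb{Z})$; each natural map $G_j\to G'$ is injective, and we regard $A':=A_{s-1}$ and $B':=B_0$ as subgroups of $G'$. Let $\varphi'\colon A'\to B'$ be the isomorphism $\varphi'(a\times(s-1))=\varphi(a)\times 0$. Then: (1) $H(G',\varphi')=A'\cap B'$. (2) The isomorphism $\Psi\colon G\to G_0\le G'$, $\Psi(g)=g\times 0$, restricts to an isomorphism $H(G,\varphi)\to H(G',\varphi')$, and $\Psi\circ\varphi^s=\varphi'\circ\Psi$ on $H(G,\varphi)$.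
   Context: For a group $Q$ and an isomorphism $\psi\colon A''\to B''$ between subgroups of $Q$, the core $H(Q,\psi)$ is $\bigcap_k H_k$ where $H_0=A''\cap B''$ and $H_{k+1}=\psi^{-1}(H_k)\cap H_k\cap\psi(H_k)$ (with $\psi^{-1}(H_k)=\{a\in A'':\psi(a)\in H_k\}$); $\psi$ restricts to an automorphism of $H(Q,\psi)$. "$\varphi^i(g)$ is defined" means $g$ lies in the domain of the $i$-fold composite of $\varphi$ regarded as a partial map $G\to G$. *)

theory Defs
  imports "HOL-Algebra.Algebra"
begin

fun core_seq :: "'a set \<Rightarrow> 'a set \<Rightarrow> ('a \<Rightarrow> 'a) \<Rightarrow> nat \<Rightarrow> 'a set" where
  "core_seq A B psi 0 = A \<inter> B"
| "core_seq A B psi (Suc k) =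
     {a \<in> A. psi a \<in> core_seq A B psi k} \<inter> core_seq A B psi k \<inter> psi ` core_seq A B psi k"

definition core :: "'a set \<Rightarrow> 'a set \<Rightarrow> ('a \<Rightarrow> 'a) \<Rightarrow> 'a set" where
  "core A B psi = (\<Inter>k. core_seq A B psi k)"

text \<open>Domain of the i-fold composite of phi, regarded as a partial map G -> G defined on A.\<close>
fun iter_dom :: "('a, 'b) monoid_scheme \<Rightarrow> 'a set \<Rightarrow> ('a \<Rightarrow> 'a) \<Rightarrow> nat \<Rightarrow> 'a set" where
  "iter_dom G A phi 0 = carrier G"
| "iter_dom G A phi (Suc i) = {g \<in> A. phi g \<in> iter_dom G A phi i}"

text \<open>The direct sum G_0 + ... + G_(s-1) of s copies of G (finite index set, so the
  product group is the direct sum).\<close>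
definition chain_sum :: "('a, 'b) monoid_scheme \<Rightarrow> nat \<Rightarrow> (nat \<Rightarrow> 'a) monoid" where
  "chain_sum G s = product_group {..<s} (\<lambda>_. G)"

definition chain_emb :: "('a, 'b) monoid_scheme \<Rightarrow> nat \<Rightarrow> nat \<Rightarrow> 'a \<Rightarrow> (nat \<Rightarrow> 'a)" where
  "chain_emb G s j g = (\<lambda>k\<in>{..<s}. if k = j then g else \<one>\<^bsub>G\<^esub>)"

definition chain_rel :: "('a, 'b) monoid_scheme \<Rightarrow> 'a set \<Rightarrow> ('a \<Rightarrow> 'a) \<Rightarrow> nat \<Rightarrow> (nat \<Rightarrow> 'a) set" where
  "chain_rel G A phi s = generate (chain_sum G s)
     {chain_emb G s j a \<otimes>\<^bsub>chain_sum G s\<^esub> inv\<^bsub>chain_sum G s\<^esub> (chain_emb G s (Suc j) (phi a)) | j a.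
        Suc j < s \<and> a \<in> A}"

text \<open>G' = H_1(K; Z) = abelianization of the amalgamated product K of the abelian groups G_j,
  i.e. the colimit in abelian groups: (G_0 + ... + G_(s-1)) / relations.\<close>
definition chain_H1 :: "('a, 'b) monoid_scheme \<Rightarrow> 'a set \<Rightarrow> ('a \<Rightarrow> 'a) \<Rightarrow> nat \<Rightarrow> (nat \<Rightarrow> 'a) set monoid" where
  "chain_H1 G A phi s = chain_sum G s Mod chain_rel G A phi s"

definition chain_map :: "('a, 'b) monoid_scheme \<Rightarrow> 'a set \<Rightarrow> ('a \<Rightarrow> 'a) \<Rightarrow> nat \<Rightarrow> nat \<Rightarrow> 'a \<Rightarrow> (nat \<Rightarrow> 'a) set" where
  "chain_map G A phi s j g = chain_rel G A phi s #>\<^bsub>chain_sum G s\<^esub> chain_emb G s j g"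

definition chain_phi :: "('a, 'b) monoid_scheme \<Rightarrow> 'a set \<Rightarrow> ('a \<Rightarrow> 'a) \<Rightarrow> nat \<Rightarrow> (nat \<Rightarrow> 'a) set \<Rightarrow> (nat \<Rightarrow> 'a) set" where
  "chain_phi G A phi s x =
     chain_map G A phi s 0 (phi (THE a. a \<in> A \<and> x = chain_map G A phi s (s - 1) a))"

end

theory Submission
  imports Defs begin



lemma core_seq_sub: "core_seq A B psi k \<subseteq> A \<inter> B"
  by (induction k) auto

lemma core_sub: "core A B psi \<subseteq> A \<inter> B"
proof
  fix x assume "x \<in> core A B psi"
  then have "x \<in> core_seq A B psi 0" unfolding core_def by blast
  then show "x \<in> A \<inter> B" by simp
qed

lemma core_closed: "x \<in> core A B psi \<Longrightarrow> psi x \<in> core A B psi"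
proof -
  assume x: "x \<in> core A B psi"
  have "psi x \<in> core_seq A B psi k" for k
    using x unfolding core_def by (auto dest: spec[of _ "Suc k"])
  then show ?thesis unfolding core_def by auto
qed

lemma core_eq:
  assumes "S = A \<inter> B" "\<forall>x\<in>S. psi x \<in> S" "S \<subseteq> psi ` S"
  shows "core A B psi = S"
proof -
  have "core_seq A B psi k = S" for k
    by (induction k) (use assms in auto)
  then show ?thesis unfolding core_def by auto
qed

lemma iter_domI:
  assumes "\<forall>a\<in>A. phi a \<in> carrier G"
  shows "b \<in> carrier G \<Longrightarrow> (\<forall>i<n. (phi ^^ i) b \<in> A) \<Longrightarrow> b \<in> iter_dom G A phi n"
proof (induction n arbitrary: b)
  case 0 then show ?case by simp
next
  case (Suc n)
  have bA: "b \<in> A" using Suc.prems(2) by (metis funpow_0 zero_less_Suc)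
  have "phi b \<in> iter_dom G A phi n"
  proof (rule Suc.IH)
    show "phi b \<in> carrier G" using assms bA by blast
    show "\<forall>i<n. (phi ^^ i) (phi b) \<in> A"
      using Suc.prems(2) by (metis Suc_mono comp_apply funpow_Suc_right)
  qed
  then show ?case using bA by simp
qed

locale chainL = comm_group G for G :: "('a,'b) monoid_scheme" (structure) +
  fixes A B :: "'a set" and phi :: "'a \<Rightarrow> 'a" and s :: nat
  assumes A: "subgroup A G" and B: "subgroup B G"
    and iso: "phi \<in> iso (G\<lparr>carrier := A\<rparr>) (G\<lparr>carrier := B\<rparr>)" and s2: "2 \<le> s"
begin

lemma l1: "x \<in> carrier G \<Longrightarrow> y \<in> carrier G \<Longrightarrow> u \<in> carrier G \<Longrightarrow> v \<in> carrier G \<Longrightarrow>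
  (x \<otimes> inv u) \<otimes> (y \<otimes> inv v) = (x \<otimes> y) \<otimes> inv (u \<otimes> v)"
  by (simp add: inv_mult m_ac)
lemma l2: "x \<in> carrier G \<Longrightarrow> u \<in> carrier G \<Longrightarrow>
  inv (x \<otimes> inv u) = inv x \<otimes> u"
  by (simp add: inv_mult m_comm)

lemma phi_hom: "phi \<in> hom (G\<lparr>carrier := A\<rparr>) (G\<lparr>carrier := B\<rparr>)"
  using iso by (simp add: iso_def)

lemma phi_bij: "bij_betw phi A B"
  using iso by (simp add: iso_def)

lemma phi_inj: "inj_on phi A" using phi_bij bij_betw_imp_inj_on by blast

lemma phiB: "a \<in> A \<Longrightarrow> phi a \<in> B"
  using phi_bij bij_betwE by metis

lemma Asub: "a \<in> A \<Longrightarrow> a \<in> carrier G" using A subgroup.mem_carrier by metis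
lemma Bsub: "a \<in> B \<Longrightarrow> a \<in> carrier G" using B subgroup.mem_carrier by metis

lemma phi_carr: "a \<in> A \<Longrightarrow> phi a \<in> carrier G" using Bsub phiB by blast

lemma phi_gh: "group_hom (G\<lparr>carrier := A\<rparr>) (G\<lparr>carrier := B\<rparr>) phi"
  by (simp add: A B group_hom.intro group_hom_axioms_def phi_hom subgroup.subgroup_is_group)

lemma phi_one [simp]: "phi \<one> = \<one>"
  using group_hom.hom_one[OF phi_gh] by simp

lemma phi_mult: "a \<in> A \<Longrightarrow> c \<in> A \<Longrightarrow> phi (a \<otimes> c) = phi a \<otimes> phi c"
  using group_hom.hom_mult[OF phi_gh, of a c] by simp

lemma phi_inv: "a \<in> A \<Longrightarrow> phi (inv a) = inv (phi a)"
  using group_hom.hom_inv[OF phi_gh, of a] A B phiB by simp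

abbreviation "Gs \<equiv> chain_sum G s"
abbreviation "emb \<equiv> chain_emb G s"
abbreviation "R \<equiv> chain_rel G A phi s"

lemma Gs_group: "group Gs"
  unfolding chain_sum_def by (simp add: is_group)

sublocale S: group Gs by (rule Gs_group)

lemma carrier_Gs: "carrier Gs = (\<Pi>\<^sub>E i\<in>{..<s}. carrier G)"
  unfolding chain_sum_def by simp

lemma mult_Gs: "x \<otimes>\<^bsub>Gs\<^esub> y = (\<lambda>k\<in>{..<s}. x k \<otimes> y k)"
  unfolding chain_sum_def by simp

lemma inv_Gs: "x \<in> carrier Gs \<Longrightarrow> inv\<^bsub>Gs\<^esub> x = (\<lambda>k\<in>{..<s}. inv (x k))"
  unfolding chain_sum_def by (simp add: is_group)

lemma one_Gs: "\<one>\<^bsub>Gs\<^esub> = (\<lambda>k\<in>{..<s}. \<one>)"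
  unfolding chain_sum_def by simp

lemma emb_carrier: "g \<in> carrier G \<Longrightarrow> emb j g \<in> carrier Gs"
  unfolding carrier_Gs chain_emb_def by auto

lemma Gs_comm: "comm_group Gs"
proof (rule group.group_comm_groupI[OF Gs_group])
  fix x y assume "x \<in> carrier Gs" "y \<in> carrier Gs"
  then show "x \<otimes>\<^bsub>Gs\<^esub> y = y \<otimes>\<^bsub>Gs\<^esub> x"
    unfolding mult_Gs carrier_Gs by (auto simp: PiE_iff m_comm intro!: restrict_ext)
qed

definition F :: "(nat \<Rightarrow> 'a) \<Rightarrow> (nat \<Rightarrow> 'a)" where
  "F \<gamma> = (\<lambda>k\<in>{..<s}. \<gamma> (Suc k) \<otimes> inv (phi (\<gamma> k)))"

definition Rset where
  "Rset = {F \<gamma> | \<gamma>. \<gamma> 0 = \<one> \<and> (\<forall>k. \<gamma> k \<in> A) \<and> (\<forall>k\<ge>s. \<gamma> k = \<one>)}"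

lemma F_carrier: assumes "(\<forall>k. \<gamma> k \<in> A)" shows "F \<gamma> \<in> carrier Gs"
proof -
  have "\<gamma> k \<in> carrier G" "phi (\<gamma> k) \<in> carrier G" for k using assms Asub Bsub phiB by auto
  then show ?thesis unfolding carrier_Gs F_def by auto
qed

lemma Rset_subgroup: "subgroup Rset Gs"
proof
  show "Rset \<subseteq> carrier Gs" unfolding Rset_def using F_carrier by auto
next
  show "\<one>\<^bsub>Gs\<^esub> \<in> Rset"
    unfolding Rset_def
    apply (rule CollectI, rule exI[of _ "\<lambda>_. \<one>"])
    by (auto simp: F_def one_Gs subgroup.one_closed[OF A])
next
  fix x y assume "x \<in> Rset" "y \<in> Rset"
  then obtain \<gamma> \<delta> where g: "x = F \<gamma>" "\<gamma> 0 = \<one>" "\<forall>k. \<gamma> k \<in> A" "\<forall>k\<ge>s. \<gamma> k = \<one>"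
    and d: "y = F \<delta>" "\<delta> 0 = \<one>" "\<forall>k. \<delta> k \<in> A" "\<forall>k\<ge>s. \<delta> k = \<one>"
    unfolding Rset_def by blast
  have "x \<otimes>\<^bsub>Gs\<^esub> y = F (\<lambda>k. \<gamma> k \<otimes> \<delta> k)"
  proof -
    have "\<gamma> (Suc k) \<otimes> inv (phi (\<gamma> k)) \<otimes> (\<delta> (Suc k) \<otimes> inv (phi (\<delta> k))) =
        \<gamma> (Suc k) \<otimes> \<delta> (Suc k) \<otimes> inv (phi (\<gamma> k \<otimes> \<delta> k))" for k
      using g d by (simp add: phi_mult l1 Asub Bsub phiB)
    then show ?thesis using g d unfolding mult_Gs F_def by (auto intro!: restrict_ext)
  qed
  moreover have "(\<lambda>k. \<gamma> k \<otimes> \<delta> k) 0 = \<one> \<and> (\<forall>k. (\<lambda>k. \<gamma> k \<otimes> \<delta> k) k \<in> A)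
     \<and> (\<forall>k\<ge>s. (\<lambda>k. \<gamma> k \<otimes> \<delta> k) k = \<one>)"
    using g d by (simp add: subgroup.m_closed[OF A])
  ultimately show "x \<otimes>\<^bsub>Gs\<^esub> y \<in> Rset" unfolding Rset_def by blast
next
  fix x assume "x \<in> Rset"
  then obtain \<gamma> where g: "x = F \<gamma>" "\<gamma> 0 = \<one>" "\<forall>k. \<gamma> k \<in> A" "\<forall>k\<ge>s. \<gamma> k = \<one>"
    unfolding Rset_def by blast
  have "inv\<^bsub>Gs\<^esub> x = F (\<lambda>k. inv (\<gamma> k))"
  proof -
    have "inv (\<gamma> (Suc k) \<otimes> inv (phi (\<gamma> k))) = inv (\<gamma> (Suc k)) \<otimes> inv (phi (inv (\<gamma> k)))" for k
      using g by (simp add: phi_inv l2 Asub Bsub phiB)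
    then show ?thesis unfolding g(1) inv_Gs[OF F_carrier[OF g(3)]] unfolding F_def
      by (auto intro!: restrict_ext)
  qed
  moreover have "(\<lambda>k. inv (\<gamma> k)) 0 = \<one> \<and> (\<forall>k. (\<lambda>k. inv (\<gamma> k)) k \<in> A)
     \<and> (\<forall>k\<ge>s. (\<lambda>k. inv (\<gamma> k)) k = \<one>)"
    using g by (simp add: subgroup.m_inv_closed[OF A])
  ultimately show "inv\<^bsub>Gs\<^esub> x \<in> Rset" unfolding Rset_def by blast
qed


lemma gen_in_Rset:
  assumes "Suc j < s" "a \<in> A"
  shows "emb j a \<otimes>\<^bsub>Gs\<^esub> inv\<^bsub>Gs\<^esub> (emb (Suc j) (phi a)) \<in> Rset"
proof -
  define \<gamma> where "\<gamma> = (\<lambda>k. if k = Suc j then a else \<one>)"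
  have ca: "a \<in> carrier G" "phi a \<in> carrier G" using assms Asub Bsub phiB by auto
  have "emb j a \<otimes>\<^bsub>Gs\<^esub> inv\<^bsub>Gs\<^esub> (emb (Suc j) (phi a)) = F \<gamma>"
    unfolding inv_Gs[OF emb_carrier[OF ca(2)]] mult_Gs unfolding F_def \<gamma>_def chain_emb_def
    using ca by (auto intro!: restrict_ext)
  moreover have "\<gamma> 0 = \<one> \<and> (\<forall>k. \<gamma> k \<in> A) \<and> (\<forall>k\<ge>s. \<gamma> k = \<one>)"
    using assms subgroup.one_closed[OF A] unfolding \<gamma>_def by auto
  ultimately show ?thesis unfolding Rset_def by blast
qed

lemma R_sub: "R \<subseteq> Rset"
  unfolding chain_rel_def
  by (rule group.generate_subgroup_incl[OF Gs_group _ Rset_subgroup]) (auto intro: gen_in_Rset)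

lemma R_subgroup: "subgroup R Gs"
  unfolding chain_rel_def
  by (rule group.generate_is_subgroup[OF Gs_group])
     (auto intro!: S.m_closed S.inv_closed emb_carrier simp: Asub phi_carr)

lemma Rset_emb:
  assumes "j < s" "c \<in> carrier G" "emb j c \<in> Rset"
  shows "c = \<one>"
proof -
  obtain \<gamma> where g: "emb j c = F \<gamma>" "\<gamma> 0 = \<one>" "\<forall>k. \<gamma> k \<in> A" "\<forall>k\<ge>s. \<gamma> k = \<one>"
    using assms(3) unfolding Rset_def by blast
  have cg: "\<gamma> k \<in> carrier G" "phi (\<gamma> k) \<in> carrier G" for k using g Asub Bsub phiB by auto
  have comp: "\<gamma> (Suc k) \<otimes> inv (phi (\<gamma> k)) = (if k = j then c else \<one>)" if "k < s" for k
    using fun_cong[OF g(1), of k] that unfolding F_def chain_emb_def by simp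
  have fw: "k \<le> j \<longrightarrow> \<gamma> k = \<one>" for k
  proof (induction k)
    case 0 then show ?case using g by simp
  next
    case (Suc k)
    show ?case
    proof
      assume "Suc k \<le> j"
      then have "\<gamma> k = \<one>" "k < s" "k \<noteq> j" using Suc assms by auto
      then show "\<gamma> (Suc k) = \<one>" using comp[of k] cg[of "Suc k"] by simp
    qed
  qed
  have bw: "j < s - d \<longrightarrow> \<gamma> (s - d) = \<one>" for d
  proof (induction d)
    case 0 then show ?case using g by simp
  next
    case (Suc d)
    show ?case
    proof
      assume h: "j < s - Suc d"
      define k where "k = s - Suc d"
      have k: "k < s" "Suc k = s - d" "k \<noteq> j" using h k_def by auto
      then have "\<gamma> (Suc k) = \<one>" using Suc h by auto
      then have "inv (phi (\<gamma> k)) = \<one>" using comp[OF k(1)] k cg by simp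
      then have "phi (\<gamma> k) = phi \<one>" using cg inv_eq_1_iff by simp
      then have "\<gamma> k = \<one>" using phi_inj g(3) subgroup.one_closed[OF A] inj_on_def by metis
      then show "\<gamma> (s - Suc d) = \<one>" using k_def by simp
    qed
  qed
  have "\<gamma> (Suc j) = \<one>" using bw[of "s - Suc j"] assms by simp
  moreover have "\<gamma> j = \<one>" using fw by simp
  ultimately show ?thesis using comp[OF assms(1)] by simp
qed

lemma coset_eqD:
  assumes "x \<in> carrier Gs" "y \<in> carrier Gs" "R #>\<^bsub>Gs\<^esub> x = R #>\<^bsub>Gs\<^esub> y"
  shows "x \<otimes>\<^bsub>Gs\<^esub> inv\<^bsub>Gs\<^esub> y \<in> R"
proof -
  have "x \<in> R #>\<^bsub>Gs\<^esub> y" using assms group.rcos_self[OF Gs_group assms(1) R_subgroup] by simp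
  from subgroup.rcos_module_imp[OF R_subgroup Gs_group assms(2) this] show ?thesis .
qed

lemma coset_eqI:
  assumes "x \<in> carrier Gs" "y \<in> carrier Gs" "x \<otimes>\<^bsub>Gs\<^esub> inv\<^bsub>Gs\<^esub> y \<in> R"
  shows "R #>\<^bsub>Gs\<^esub> x = R #>\<^bsub>Gs\<^esub> y"
proof -
  have "x \<in> R #>\<^bsub>Gs\<^esub> y" using subgroup.rcos_module_rev[OF R_subgroup Gs_group assms(2,1,3)] .
  from S.repr_independence[OF this assms(2) R_subgroup] show ?thesis by simp
qed

lemma emb_diff: "g \<in> carrier G \<Longrightarrow> h \<in> carrier G \<Longrightarrow>
   emb j g \<otimes>\<^bsub>Gs\<^esub> inv\<^bsub>Gs\<^esub> (emb j h) = emb j (g \<otimes> inv h)"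
  unfolding inv_Gs[OF emb_carrier] mult_Gs unfolding chain_emb_def by (auto intro!: restrict_ext)

lemma map_inj: "j < s \<Longrightarrow> inj_on (chain_map G A phi s j) (carrier G)"
proof (rule inj_onI)
  fix g h assume j: "j < s" and gh: "g \<in> carrier G" "h \<in> carrier G"
    "chain_map G A phi s j g = chain_map G A phi s j h"
  have "emb j g \<otimes>\<^bsub>Gs\<^esub> inv\<^bsub>Gs\<^esub> (emb j h) \<in> R"
    by (rule coset_eqD[OF emb_carrier[OF gh(1)] emb_carrier[OF gh(2)]]) (use gh(3) in \<open>simp add: chain_map_def\<close>)
  then have "emb j (g \<otimes> inv h) \<in> R" using emb_diff[OF gh(1,2)] by simp
  then have "g \<otimes> inv h = \<one>" using Rset_emb[OF j] R_sub gh by blast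
  then show "g = h" using gh by (simp add: inv_solve_right')
qed


lemma Rset_int:
  assumes b: "b \<in> carrier G" and a: "a' \<in> A"
    and mem: "emb 0 b \<otimes>\<^bsub>Gs\<^esub> inv\<^bsub>Gs\<^esub> (emb (s - 1) a') \<in> Rset"
  shows "(\<forall>i<s. (phi ^^ i) b \<in> A) \<and> a' = (phi ^^ (s - 1)) b"
proof -
  obtain \<gamma> where g: "emb 0 b \<otimes>\<^bsub>Gs\<^esub> inv\<^bsub>Gs\<^esub> (emb (s - 1) a') = F \<gamma>" "\<gamma> 0 = \<one>" "\<forall>k. \<gamma> k \<in> A" "\<forall>k\<ge>s. \<gamma> k = \<one>"
    using mem unfolding Rset_def by blast
  have cg: "\<gamma> k \<in> carrier G" "phi (\<gamma> k) \<in> carrier G" for k using g Asub phi_carr by auto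
  have ca: "a' \<in> carrier G" using a Asub by auto
  have comp: "\<gamma> (Suc k) \<otimes> inv (phi (\<gamma> k)) = (if k = 0 then b else \<one>) \<otimes> inv (if k = s - 1 then a' else \<one>)"
    if "k < s" for k
  proof -
    have "(emb 0 b \<otimes>\<^bsub>Gs\<^esub> inv\<^bsub>Gs\<^esub> (emb (s - 1) a')) k = F \<gamma> k" using g(1) by simp
    then show ?thesis using that unfolding inv_Gs[OF emb_carrier[OF ca]] mult_Gs
      unfolding F_def chain_emb_def by simp
  qed
  have claim: "k < s - 1 \<longrightarrow> \<gamma> (Suc k) = (phi ^^ k) b" for k
  proof (induction k)
    case 0
    show ?case
    proof
      assume "0 < s - 1"
      then show "\<gamma> (Suc 0) = (phi ^^ 0) b" using comp[of 0] cg b g(2) by simp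
    qed
  next
    case (Suc k)
    show ?case
    proof
      assume h: "Suc k < s - 1"
      then have "\<gamma> (Suc (Suc k)) \<otimes> inv (phi (\<gamma> (Suc k))) = \<one>" using comp[of "Suc k"] by simp
      then have "\<gamma> (Suc (Suc k)) = phi (\<gamma> (Suc k))" using cg by (simp add: inv_solve_right')
      then show "\<gamma> (Suc (Suc k)) = (phi ^^ Suc k) b" using Suc h by simp
    qed
  qed
  obtain n where n: "s = Suc (Suc n)" using s2 by (metis add_2_eq_Suc le_Suc_ex)
  have "\<one> \<otimes> inv (phi (\<gamma> (Suc n))) = \<one> \<otimes> inv a'" using comp[of "Suc n"] g(4) n by simp
  then have "inv (phi (\<gamma> (Suc n))) = inv a'" using cg ca by simp
  then have "phi (\<gamma> (Suc n)) = a'" using cg ca by (metis inv_inv)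
  moreover have "\<gamma> (Suc n) = (phi ^^ n) b" using claim[of n] n by simp
  ultimately have last: "a' = (phi ^^ (s - 1)) b" using n by simp
  have "(phi ^^ i) b \<in> A" if "i < s" for i
  proof (cases "i < s - 1")
    case True then show ?thesis using claim[of i] g(3) by metis
  next
    case False then have "i = s - 1" using that by simp
    then show ?thesis using last a by simp
  qed
  then show ?thesis using last by blast
qed

lemma tele: "x \<in> carrier Gs \<Longrightarrow> y \<in> carrier Gs \<Longrightarrow> z \<in> carrier Gs \<Longrightarrow>
  (x \<otimes>\<^bsub>Gs\<^esub> inv\<^bsub>Gs\<^esub> y) \<otimes>\<^bsub>Gs\<^esub> (y \<otimes>\<^bsub>Gs\<^esub> inv\<^bsub>Gs\<^esub> z) = x \<otimes>\<^bsub>Gs\<^esub> inv\<^bsub>Gs\<^esub> z"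
  by (simp add: S.m_assoc[symmetric]) (simp add: S.m_assoc)

lemma telescope:
  assumes h: "h \<in> carrier G"
  shows "k < s \<longrightarrow> (\<forall>i<k. (phi ^^ i) h \<in> A) \<longrightarrow>
     emb 0 h \<otimes>\<^bsub>Gs\<^esub> inv\<^bsub>Gs\<^esub> (emb k ((phi ^^ k) h)) \<in> R"
proof (induction k)
  case 0
  show ?case using h emb_carrier subgroup.one_closed[OF R_subgroup] by simp
next
  case (Suc k)
  show ?case
  proof (intro impI)
    assume k: "Suc k < s" and it: "\<forall>i<Suc k. (phi ^^ i) h \<in> A"
    define c where "c = (phi ^^ k) h"
    have cA: "c \<in> A" using it c_def by simp
    have cc: "c \<in> carrier G" "phi c \<in> carrier G" using cA Asub phi_carr by auto
    have X: "emb 0 h \<otimes>\<^bsub>Gs\<^esub> inv\<^bsub>Gs\<^esub> (emb k c) \<in> R" using Suc k it c_def by simp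
    have Y: "emb k c \<otimes>\<^bsub>Gs\<^esub> inv\<^bsub>Gs\<^esub> (emb (Suc k) (phi c)) \<in> R"
      unfolding chain_rel_def by (rule generate.incl) (use k cA in blast)
    have "(emb 0 h \<otimes>\<^bsub>Gs\<^esub> inv\<^bsub>Gs\<^esub> (emb k c)) \<otimes>\<^bsub>Gs\<^esub> (emb k c \<otimes>\<^bsub>Gs\<^esub> inv\<^bsub>Gs\<^esub> (emb (Suc k) (phi c))) \<in> R"
      using subgroup.m_closed[OF R_subgroup X Y] .
    then show "emb 0 h \<otimes>\<^bsub>Gs\<^esub> inv\<^bsub>Gs\<^esub> (emb (Suc k) ((phi ^^ Suc k) h)) \<in> R"
      using tele[OF emb_carrier[OF h] emb_carrier[OF cc(1)] emb_carrier[OF cc(2)]] c_def by simp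
  qed
qed

lemma emb_hom: "emb 0 \<in> hom G Gs"
proof (rule homI)
  show "x \<in> carrier G \<Longrightarrow> emb 0 x \<in> carrier Gs" for x by (rule emb_carrier)
  show "x \<in> carrier G \<Longrightarrow> y \<in> carrier G \<Longrightarrow> emb 0 (x \<otimes> y) = emb 0 x \<otimes>\<^bsub>Gs\<^esub> emb 0 y" for x y
    unfolding mult_Gs unfolding chain_emb_def by (auto intro!: restrict_ext)
qed

lemma map_hom: "chain_map G A phi s 0 \<in> hom G (chain_H1 G A phi s)"
proof -
  have "normal R Gs" using comm_group.subgroup_imp_normal[OF Gs_comm R_subgroup] .
  then have "(\<lambda>a. R #>\<^bsub>Gs\<^esub> a) \<in> hom Gs (Gs Mod R)" by (rule normal.r_coset_hom_Mod)
  then have "(\<lambda>a. R #>\<^bsub>Gs\<^esub> a) \<circ> emb 0 \<in> hom G (Gs Mod R)" using Group.hom_compose[OF emb_hom] by blast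
  moreover have "(\<lambda>a. R #>\<^bsub>Gs\<^esub> a) \<circ> emb 0 = chain_map G A phi s 0"
    by (auto simp: chain_map_def)
  ultimately show ?thesis unfolding chain_H1_def by simp
qed

end

locale chainH = chainL +
  fixes r :: nat
  assumes fin: "finite (carrier G)"
    and hyp: "\<forall>s'>r. \<forall>g\<in>carrier G. g \<in> core A B phi \<longleftrightarrow> (\<forall>i<s'. g \<in> iter_dom G A phi i)"
    and rs: "r < s"
begin

abbreviation "C \<equiv> core A B phi"
abbreviation "m0 \<equiv> chain_map G A phi s 0"
abbreviation "mL \<equiv> chain_map G A phi s (s - 1)"

lemma C_AB: "C \<subseteq> A \<inter> B" by (rule core_sub)
lemma C_carr: "C \<subseteq> carrier G" using C_AB Asub by blast

lemma C_img: "phi ` C = C"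
proof (rule endo_inj_surj)
  show "finite C" using fin C_carr finite_subset by blast
  show "phi ` C \<subseteq> C" by (auto intro: core_closed)
  show "inj_on phi C" using phi_inj C_AB inj_on_subset by blast
qed

lemma C_img_pow: "(phi ^^ n) ` C = C"
proof (induction n)
  case 0 then show ?case by simp
next
  case (Suc n)
  have "(phi ^^ Suc n) ` C = phi ` ((phi ^^ n) ` C)" by (simp add: image_image)
  then show ?case using Suc.IH C_img by simp
qed

lemma C_pow: "h \<in> C \<Longrightarrow> (phi ^^ n) h \<in> C"
  using C_img_pow by blast

lemma in_core:
  assumes "b \<in> carrier G" "\<forall>i<s. (phi ^^ i) b \<in> A"
  shows "b \<in> C"
proof -
  have "b \<in> iter_dom G A phi i" if "i < s" for i
    by (rule iter_domI) (use assms that phi_carr in auto)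
  then show ?thesis using hyp rs assms(1) by blast
qed

lemma m0_mL: assumes "h \<in> C" shows "m0 h = mL ((phi ^^ (s - 1)) h)"
proof -
  have hc: "h \<in> carrier G" using assms C_carr by blast
  have pc: "(phi ^^ (s - 1)) h \<in> carrier G" using C_pow[OF assms] C_carr by blast
  have "emb 0 h \<otimes>\<^bsub>Gs\<^esub> inv\<^bsub>Gs\<^esub> (emb (s - 1) ((phi ^^ (s - 1)) h)) \<in> R"
    using telescope[OF hc, of "s - 1"] s2 C_pow[OF assms] C_AB by auto
  then show ?thesis unfolding chain_map_def
    by (rule coset_eqI[OF emb_carrier[OF hc] emb_carrier[OF pc]])
qed

lemma int_sub: "mL ` A \<inter> m0 ` B \<subseteq> m0 ` C"
proof
  fix x assume "x \<in> mL ` A \<inter> m0 ` B"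
  then obtain a b where ab: "a \<in> A" "b \<in> B" "x = mL a" "x = m0 b" by blast
  have ac: "a \<in> carrier G" and bc: "b \<in> carrier G" using ab Asub Bsub by auto
  have "emb 0 b \<otimes>\<^bsub>Gs\<^esub> inv\<^bsub>Gs\<^esub> (emb (s - 1) a) \<in> R"
    using coset_eqD[OF emb_carrier[OF bc] emb_carrier[OF ac]] ab unfolding chain_map_def by simp
  then have "emb 0 b \<otimes>\<^bsub>Gs\<^esub> inv\<^bsub>Gs\<^esub> (emb (s - 1) a) \<in> Rset" using R_sub by blast
  from Rset_int[OF bc ab(1) this] have "b \<in> C" using in_core bc by blast
  then show "x \<in> m0 ` C" using ab by blast
qed

lemma sub_int: "m0 ` C \<subseteq> mL ` A \<inter> m0 ` B"
proof
  fix x assume "x \<in> m0 ` C"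
  then obtain h where h: "h \<in> C" "x = m0 h" by blast
  have "x = mL ((phi ^^ (s - 1)) h)" using m0_mL h by simp
  moreover have "(phi ^^ (s - 1)) h \<in> A" using C_pow[OF h(1)] C_AB by blast
  moreover have "h \<in> B" using h C_AB by blast
  ultimately show "x \<in> mL ` A \<inter> m0 ` B" using h by blast
qed

lemma psi_val: assumes "h \<in> C" shows "chain_phi G A phi s (m0 h) = m0 ((phi ^^ s) h)"
proof -
  have pA: "(phi ^^ (s - 1)) h \<in> A" using C_pow[OF assms] C_AB by blast
  have "(THE a. a \<in> A \<and> m0 h = mL a) = (phi ^^ (s - 1)) h"
  proof (rule the_equality)
    show "(phi ^^ (s - 1)) h \<in> A \<and> m0 h = mL ((phi ^^ (s - 1)) h)" using pA m0_mL[OF assms] by blast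
    fix a assume "a \<in> A \<and> m0 h = mL a"
    then show "a = (phi ^^ (s - 1)) h"
      using map_inj[of "s - 1"] s2 pA m0_mL[OF assms] Asub inj_on_def
      by (metis diff_less less_le_trans pos2 zero_less_one)
  qed
  moreover obtain n where "s = Suc n" using s2 by (metis Suc_le_D add_leD2 numeral_2_eq_2 add_2_eq_Suc)
  ultimately show ?thesis unfolding chain_phi_def by simp
qed

lemma main_core: "core (mL ` A) (m0 ` B) (chain_phi G A phi s) = m0 ` C"
proof (rule core_eq)
  show "m0 ` C = mL ` A \<inter> m0 ` B" using int_sub sub_int by blast
  show "\<forall>x\<in>m0 ` C. chain_phi G A phi s x \<in> m0 ` C" using psi_val C_pow by auto
  show "m0 ` C \<subseteq> chain_phi G A phi s ` m0 ` C"
  proof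
    fix x assume "x \<in> m0 ` C"
    then obtain h where h: "h \<in> C" "x = m0 h" by blast
    then obtain h' where h': "h' \<in> C" "h = (phi ^^ s) h'" using C_img_pow[of s] by blast
    then show "x \<in> chain_phi G A phi s ` m0 ` C" using psi_val h by auto
  qed
qed

end


theorem lemma5p8:
  fixes G :: "('a, 'b) monoid_scheme" and p :: nat and r s :: nat
    and A B :: "'a set" and phi :: "'a \<Rightarrow> 'a"
  assumes "Factorial_Ring.prime p"
    and "comm_group G" and "finite (carrier G)" and "\<exists>n. order G = p ^ n"
    and "subgroup A G" and "subgroup B G"
    and "phi \<in> iso (G\<lparr>carrier := A\<rparr>) (G\<lparr>carrier := B\<rparr>)"
    and "r \<ge> 1"
    and "\<forall>s'>r. \<forall>g\<in>carrier G.
           g \<in> core A B phi \<longleftrightarrow> (\<forall>i<s'. g \<in> iter_dom G A phi i)"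
    and "s > r"
  shows "(\<forall>j<s. inj_on (chain_map G A phi s j) (carrier G))
    \<and> core (chain_map G A phi s (s - 1) ` A) (chain_map G A phi s 0 ` B) (chain_phi G A phi s)
        = chain_map G A phi s (s - 1) ` A \<inter> chain_map G A phi s 0 ` B
    \<and> chain_map G A phi s 0 \<in> hom G (chain_H1 G A phi s)
    \<and> bij_betw (chain_map G A phi s 0) (core A B phi)
        (core (chain_map G A phi s (s - 1) ` A) (chain_map G A phi s 0 ` B) (chain_phi G A phi s))
    \<and> (\<forall>h\<in>core A B phi.
         chain_map G A phi s 0 ((phi ^^ s) h) = chain_phi G A phi s (chain_map G A phi s 0 h))"
proof -
  have "chainH G A B phi s r"
  proof (intro chainH.intro chainL.intro chainL_axioms.intro chainH_axioms.intro)
    show "2 \<le> s" using assms by simp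
  qed (rule assms)+
  then interpret chainH G A B phi s r .
  have inj0: "inj_on (chain_map G A phi s 0) (core A B phi)"
    by (rule inj_on_subset[OF map_inj C_carr]) (use s2 in simp)
  show ?thesis
  proof (intro conjI)
    show "\<forall>j<s. inj_on (chain_map G A phi s j) (carrier G)" using map_inj by blast
    show "core (chain_map G A phi s (s - 1) ` A) (chain_map G A phi s 0 ` B) (chain_phi G A phi s)
        = chain_map G A phi s (s - 1) ` A \<inter> chain_map G A phi s 0 ` B"
      using main_core subset_antisym[OF sub_int int_sub] by simp
    show "chain_map G A phi s 0 \<in> hom G (chain_H1 G A phi s)" by (rule map_hom)
    show "bij_betw (chain_map G A phi s 0) (core A B phi)
        (core (chain_map G A phi s (s - 1) ` A) (chain_map G A phi s 0 ` B) (chain_phi G A phi s))"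
      by (rule bij_betw_imageI[OF inj0 main_core[symmetric]])
    show "\<forall>h\<in>core A B phi.
         chain_map G A phi s 0 ((phi ^^ s) h) = chain_phi G A phi s (chain_map G A phi s 0 h)"
    proof
      fix h assume "h \<in> core A B phi"
      from psi_val[OF this] show "chain_map G A phi s 0 ((phi ^^ s) h) = chain_phi G A phi s (chain_map G A phi s 0 h)"
        by simp
    qed
  qed
qed

end
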